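(* For any time complexity function $t$, $$\mathrm{IP}(\mathrm{constant\ space},\ \infty\ \mathrm{private\ random\ bits},\ \infty\ \mathrm{public\ random\ bits},\ O(t(n))\ \mathrm{time})\subseteq\mathrm{IP}(\mathrm{constant\ space},\ O(n)\ \mathrm{private\ random\ bits},\ O(n)\ \mathrm{public\ random\ bits},\ O(n)\ \mathrm{time}),$$ and the same inclusion holds for the $\mathrm{IP}^{\mathrm{high}}$ variants of the two classes.
   Context: Interactive proof systems. A verifier is a probabilistic Turing machine with a read-only input tape containing $\rhd w\lhd$, a read-write work tape, and a read-write communication cell shared with a prover. Its states may flip private coins (fair random bits hidden from the prover), flip public coins (fair random bits revealed to the prover; public-coin states are communication states), and/or write to the communication cell. In each step, based on the state, scanned symbols and coin outcomes, it changes state, writes on the work tape, writes to the communication cell (if in a communication state), and moves its heads. Each time the verifier writes to the communication cell, the prover overwrites it with a symbol that is an arbitrary function of $w$, the history of public coin outcomes, and the communication symbols so far. The verifier halts on entering accept/reject; it may run forever. $V$ verifies $L$ with error $\varepsilon=\max(\varepsilon^+,\varepsilon^-)$, $\varepsilon^\pm<1/2$, if some prover makes $V$ accept every $w\in L$ with probability at least $1-\varepsilon^+$, and for every prover and every $w\notin L$, $V$ halts and rejects with probability at least $1-\varepsilon^-$. $\mathrm{IP}^{\mathrm{high}}(\ldots)$ is the class of languages verifiable with some error $\varepsilon<1/2$ by verifiers within the listed resource bounds; $\mathrm{IP}(\ldots)$ is the class of languages verifiable with arbitrarily low error (for every $\varepsilon>0$ there is a verifier within the bounds with error at most $\varepsilon$).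 All bounds here are worst-case functions of the input length $n$; constant space means $O(1)$ work-tape cells; $\infty$ means no bound. *)

theory Defs
  imports "HOL-Probability.Probability"
begin

text \<open>Symbols of the read-only input tape, which holds LEnd w REnd.\<close>
datatype 'a isym = LEnd | Sym 'a | REnd

text \<open>States, work-tape symbols and communication symbols are natural
numbers, restricted to the finite sets states, wsyms, csyms.
Work-tape blank and initial content of the communication cell are 0.
delta q a g c b1 b2 = (q', g', c', dI, dW): given state q, scanned input symbol a,
scanned work symbol g, content c of the communication cell, private coin outcome b1
(only meaningful in private-coin states) and public coin outcome b2 (only meaningful
in public-coin states) it yields the new state, the symbol written on the work tape,
the symbol written to the communication cell (only used in communication states),
and the moves of the input and work heads.\<close>
record 'a verifier =
  states :: "nat set"
  wsyms :: "nat set"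
  csyms :: "nat set"
  start :: nat
  acc :: nat
  rej :: nat
  privst :: "nat \<Rightarrow> bool"
  pubst :: "nat \<Rightarrow> bool"
  commst :: "nat \<Rightarrow> bool"
  delta :: "nat \<Rightarrow> 'a isym \<Rightarrow> nat \<Rightarrow> nat \<Rightarrow> bool \<Rightarrow> bool \<Rightarrow> nat \<times> nat \<times> nat \<times> int \<times> int"

definition wf_verifier :: "'a verifier \<Rightarrow> bool" where
  "wf_verifier V \<longleftrightarrow>
     finite (states V) \<and> finite (wsyms V) \<and> finite (csyms V) \<and>
     start V \<in> states V \<and> acc V \<in> states V \<and> rej V \<in> states V \<and> acc V \<noteq> rej V \<and>
     0 \<in> wsyms V \<and> 0 \<in> csyms V \<and>
     (\<forall>q. pubst V q \<longrightarrow> commst V q) \<and>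
     (\<forall>q a g c b1 b2. q \<in> states V \<longrightarrow> g \<in> wsyms V \<longrightarrow> c \<in> csyms V \<longrightarrow>
        (case delta V q a g c b1 b2 of (q', g', c', dI, dW) \<Rightarrow>
           q' \<in> states V \<and> g' \<in> wsyms V \<and> c' \<in> csyms V \<and>
           dI \<in> {-1, 0, 1} \<and> dW \<in> {-1, 0, 1}))"

text \<open>A prover: its answer is a function of the input and of the communication history,
i.e. the list (in order) of symbols written by the verifier together with the public
coin outcome of that communication step (if it was a public-coin step).\<close>
type_synonym 'a prover = "'a list \<Rightarrow> (nat \<times> bool option) list \<Rightarrow> nat"

definition valid_prover :: "'a verifier \<Rightarrow> 'a prover \<Rightarrow> bool" where
  "valid_prover V P \<longleftrightarrow> (\<forall>w h. P w h \<in> csyms V)"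

record config =
  cst :: nat
  ihead :: nat
  wtape :: "nat \<Rightarrow> nat"
  whead :: nat
  cell :: nat
  hist :: "(nat \<times> bool option) list"
  npriv :: nat
  npub :: nat

definition init_config :: "'a verifier \<Rightarrow> config" where
  "init_config V = \<lparr>cst = start V, ihead = 0, wtape = (\<lambda>_. 0), whead = 0, cell = 0,
     hist = [], npriv = 0, npub = 0\<rparr>"

definition input_sym :: "'a list \<Rightarrow> nat \<Rightarrow> 'a isym" where
  "input_sym w i = (if i = 0 then LEnd else if i \<le> length w then Sym (w ! (i - 1)) else REnd)"

text \<open>One step. The coin sequence \<omega> supplies fresh fair bits; private and public coin
flips consume them in order (the private bit first).\<close>
definition step :: "'a verifier \<Rightarrow> 'a prover \<Rightarrow> 'a list \<Rightarrow> (nat \<Rightarrow> bool) \<Rightarrow> config \<Rightarrow> config" where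
  "step V P w \<omega> c =
    (if cst c = acc V \<or> cst c = rej V then c else
     let q = cst c;
         ptr = npriv c + npub c;
         b1 = (if privst V q then \<omega> ptr else False);
         ptr' = (if privst V q then ptr + 1 else ptr);
         b2 = (if pubst V q then \<omega> ptr' else False);
         (q', g', c', dI, dW) = delta V q (input_sym w (ihead c)) (wtape c (whead c)) (cell c) b1 b2;
         h' = hist c @ [(c', if pubst V q then Some b2 else None)]
     in \<lparr>cst = q',
         ihead = nat (max 0 (min (int (length w) + 1) (int (ihead c) + dI))),
         wtape = (wtape c)(whead c := g'),
         whead = nat (max 0 (int (whead c) + dW)),
         cell = (if commst V q then P w h' else cell c),
         hist = (if commst V q then h' else hist c),
         npriv = (if privst V q then npriv c + 1 else npriv c),
         npub = (if pubst V q then npub c + 1 else npub c)\<rparr>)"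

definition run :: "'a verifier \<Rightarrow> 'a prover \<Rightarrow> 'a list \<Rightarrow> (nat \<Rightarrow> bool) \<Rightarrow> nat \<Rightarrow> config" where
  "run V P w \<omega> k = (step V P w \<omega> ^^ k) (init_config V)"

definition coins :: "(nat \<Rightarrow> bool) measure" where
  "coins = (\<Pi>\<^sub>M i\<in>(UNIV::nat set). measure_pmf (bernoulli_pmf (1/2)))"

definition prob_accept :: "'a verifier \<Rightarrow> 'a prover \<Rightarrow> 'a list \<Rightarrow> real" where
  "prob_accept V P w = measure coins {\<omega> \<in> space coins. \<exists>k. cst (run V P w \<omega> k) = acc V}"

definition prob_reject :: "'a verifier \<Rightarrow> 'a prover \<Rightarrow> 'a list \<Rightarrow> real" where
  "prob_reject V P w = measure coins {\<omega> \<in> space coins. \<exists>k. cst (run V P w \<omega> k) = rej V}"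

definition verifies :: "'a verifier \<Rightarrow> 'a list set \<Rightarrow> real \<Rightarrow> real \<Rightarrow> bool" where
  "verifies V L ep em \<longleftrightarrow> ep < 1/2 \<and> em < 1/2 \<and>
     (\<exists>P. valid_prover V P \<and> (\<forall>w\<in>L. prob_accept V P w \<ge> 1 - ep)) \<and>
     (\<forall>P. valid_prover V P \<longrightarrow> (\<forall>w. w \<notin> L \<longrightarrow> prob_reject V P w \<ge> 1 - em))"

definition const_space :: "'a verifier \<Rightarrow> bool" where
  "const_space V \<longleftrightarrow> (\<exists>c. \<forall>w P \<omega> k. valid_prover V P \<longrightarrow> whead (run V P w \<omega> k) \<le> c)"

definition priv_bits_O :: "'a verifier \<Rightarrow> (nat \<Rightarrow> nat) \<Rightarrow> bool" where
  "priv_bits_O V f \<longleftrightarrow> (\<exists>c N. \<forall>w. length w \<ge> N \<longrightarrow> (\<forall>P \<omega> k. valid_prover V P \<longrightarrow>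
      npriv (run V P w \<omega> k) \<le> c * f (length w)))"

definition pub_bits_O :: "'a verifier \<Rightarrow> (nat \<Rightarrow> nat) \<Rightarrow> bool" where
  "pub_bits_O V f \<longleftrightarrow> (\<exists>c N. \<forall>w. length w \<ge> N \<longrightarrow> (\<forall>P \<omega> k. valid_prover V P \<longrightarrow>
      npub (run V P w \<omega> k) \<le> c * f (length w)))"

definition time_O :: "'a verifier \<Rightarrow> (nat \<Rightarrow> nat) \<Rightarrow> bool" where
  "time_O V f \<longleftrightarrow> (\<exists>c N. \<forall>w. length w \<ge> N \<longrightarrow> (\<forall>P \<omega>. valid_prover V P \<longrightarrow>
      (\<exists>k \<le> c * f (length w). cst (run V P w \<omega> k) \<in> {acc V, rej V})))"

definition IP_high :: "('a verifier \<Rightarrow> bool) \<Rightarrow> 'a list set set" where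
  "IP_high R = {L. \<exists>V ep em. wf_verifier V \<and> R V \<and> verifies V L ep em}"

definition IP :: "('a verifier \<Rightarrow> bool) \<Rightarrow> 'a list set set" where
  "IP R = {L. \<forall>\<epsilon>>0. \<exists>V ep em. wf_verifier V \<and> R V \<and> verifies V L ep em \<and> max ep em \<le> \<epsilon>}"

text \<open>IP(constant space, infinite private bits, infinite public bits, O(t) time)\<close>
definition bounds_const_time :: "(nat \<Rightarrow> nat) \<Rightarrow> 'a verifier \<Rightarrow> bool" where
  "bounds_const_time t V \<longleftrightarrow> const_space V \<and> time_O V t"

definition bounds_linear :: "'a verifier \<Rightarrow> bool" where
  "bounds_linear V \<longleftrightarrow> const_space V \<and> priv_bits_O V (\<lambda>n. n) \<and> pub_bits_O V (\<lambda>n. n)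
     \<and> time_O V (\<lambda>n. n)"

end

theory Submission
  imports Defs
begin


type_synonym core = "nat \<times> nat \<times> (nat \<Rightarrow> nat) \<times> nat \<times> nat"

definition core :: "config \<Rightarrow> core" where
  "core c = (cst c, ihead c, wtape c, whead c, cell c)"

definition cstep :: "'a verifier \<Rightarrow> 'a list \<Rightarrow> core \<Rightarrow> bool \<Rightarrow> bool \<Rightarrow> nat \<Rightarrow> core" where
  "cstep V w s b1 b2 a = (case s of (q, i, tp, hp, cl) \<Rightarrow>
     (case delta V q (input_sym w i) (tp hp) cl (if privst V q then b1 else False)
              (if pubst V q then b2 else False) of (q', g', c', dI, dW) \<Rightarrow>
      (q', nat (max 0 (min (int (length w) + 1) (int i + dI))), tp(hp := g'),
       nat (max 0 (int hp + dW)), if commst V q then a else cl)))"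

definition gen_step :: "'a verifier \<Rightarrow> 'a list \<Rightarrow> config \<Rightarrow> bool \<Rightarrow> bool \<Rightarrow>
    ((nat \<times> bool option) list \<Rightarrow> nat) \<Rightarrow> config" where
  "gen_step V w c b1 b2 ans =
    (case delta V (cst c) (input_sym w (ihead c)) (wtape c (whead c)) (cell c)
        (if privst V (cst c) then b1 else False) (if pubst V (cst c) then b2 else False) of
     (q', g', c', dI, dW) \<Rightarrow>
      \<lparr>cst = q',
         ihead = nat (max 0 (min (int (length w) + 1) (int (ihead c) + dI))),
         wtape = (wtape c)(whead c := g'),
         whead = nat (max 0 (int (whead c) + dW)),
         cell = (if commst V (cst c) then ans (hist c @ [(c', if pubst V (cst c) then Some (if pubst V (cst c) then b2 else False) else None)]) else cell c),
         hist = (if commst V (cst c) then hist c @ [(c', if pubst V (cst c) then Some (if pubst V (cst c) then b2 else False) else None)] else hist c),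
         npriv = (if privst V (cst c) then npriv c + 1 else npriv c),
         npub = (if pubst V (cst c) then npub c + 1 else npub c)\<rparr>)"

lemma step_gen:
  assumes "cst c \<noteq> acc V" "cst c \<noteq> rej V"
  shows "step V P w \<omega> c = gen_step V w c (\<omega> (npriv c + npub c))
     (\<omega> (if privst V (cst c) then npriv c + npub c + 1 else npriv c + npub c)) (P w)"
proof -
  obtain q' g' c' dI dW where d: "delta V (cst c) (input_sym w (ihead c)) (wtape c (whead c)) (cell c)
        (if privst V (cst c) then \<omega> (npriv c + npub c) else False)
        (if pubst V (cst c) then \<omega> (if privst V (cst c) then npriv c + npub c + 1 else npriv c + npub c) else False)
      = (q', g', c', dI, dW)" by (cases "delta V (cst c) (input_sym w (ihead c)) (wtape c (whead c)) (cell c)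
        (if privst V (cst c) then \<omega> (npriv c + npub c) else False)
        (if pubst V (cst c) then \<omega> (if privst V (cst c) then npriv c + npub c + 1 else npriv c + npub c) else False)") auto
  show ?thesis using assms d unfolding step_def gen_step_def Let_def by simp
qed

lemma core_gen: "core (gen_step V w c b1 b2 ans) = cstep V w (core c) b1 b2 (cell (gen_step V w c b1 b2 ans))"
  unfolding core_def cstep_def gen_step_def
  by (auto split: prod.splits)

lemma core_gen_const: "core (gen_step V w c b1 b2 (\<lambda>_. a)) = cstep V w (core c) b1 b2 a"
  unfolding core_def cstep_def gen_step_def
  by (auto split: prod.splits)

lemma gen_step_cong:
  assumes "privst V (cst c) \<Longrightarrow> b1 = b1'" "pubst V (cst c) \<Longrightarrow> b2 = b2'"
    "commst V (cst c) \<Longrightarrow> (\<And>h. length h = Suc (length (hist c)) \<Longrightarrow> ans h = ans' h)"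
  shows "gen_step V w c b1 b2 ans = gen_step V w c b1' b2' ans'"
  using assms unfolding gen_step_def
  by (cases "privst V (cst c)"; cases "pubst V (cst c)"; cases "commst V (cst c)"; auto split: prod.splits)

lemma run_0[simp]: "run V P w \<omega> 0 = init_config V"
  by (simp add: run_def)

lemma run_Suc[simp]: "run V P w \<omega> (Suc k) = step V P w \<omega> (run V P w \<omega> k)"
  by (simp add: run_def)

lemma step_halted: "cst c = acc V \<or> cst c = rej V \<Longrightarrow> step V P w \<omega> c = c"
  by (simp add: step_def)

lemma run_halted:
  assumes "cst (run V P w \<omega> k0) \<in> {acc V, rej V}" "k0 \<le> k"
  shows "run V P w \<omega> k = run V P w \<omega> k0"
  using assms(2)
proof (induction k rule: dec_induct)
  case base then show ?case by simp
next
  case (step m) then show ?case using assms(1) by (auto simp: step_halted)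
qed

lemma gen_counters:
  "npriv (gen_step V w c b1 b2 ans) = (if privst V (cst c) then npriv c + 1 else npriv c)"
  "npub (gen_step V w c b1 b2 ans) = (if pubst V (cst c) then npub c + 1 else npub c)"
  "length (hist (gen_step V w c b1 b2 ans)) = (if commst V (cst c) then Suc (length (hist c)) else length (hist c))"
  unfolding gen_step_def by (auto split: prod.splits)

lemma npriv_le: "npriv (run V P w \<omega> k) \<le> k"
proof (induction k)
  case 0 then show ?case by (simp add: init_config_def)
next
  case (Suc k)
  then show ?case
    by (cases "cst (run V P w \<omega> k) = acc V \<or> cst (run V P w \<omega> k) = rej V")
       (auto simp: step_halted step_gen gen_counters)
qed

lemma npub_le: "npub (run V P w \<omega> k) \<le> k"
proof (induction k)
  case 0 then show ?case by (simp add: init_config_def)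
next
  case (Suc k)
  then show ?case
    by (cases "cst (run V P w \<omega> k) = acc V \<or> cst (run V P w \<omega> k) = rej V")
       (auto simp: step_halted step_gen gen_counters)
qed



lemma interval_uniq:
  fixes f :: "nat \<Rightarrow> nat"
  assumes "mono f" "f k \<le> x" "x < f (Suc k)" "f k' \<le> x" "x < f (Suc k')"
  shows "k = k'"
proof (rule ccontr)
  assume "k \<noteq> k'"
  then consider "k < k'" | "k' < k" by linarith
  then show False
  proof cases
    case 1 then have "f (Suc k) \<le> f k'" using assms(1) by (simp add: monoD)
    then show False using assms by linarith
  next
    case 2 then have "f (Suc k') \<le> f k" using assms(1) by (simp add: monoD)
    then show False using assms by linarith
  qed
qed

lemma fst_core[simp]: "fst (core c) = cst c"
  by (simp add: core_def)

lemma realize: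
  assumes "0 \<in> csyms V" "p 0 = core (init_config V)"
   "\<forall>k. fst (p k) \<notin> {acc V, rej V} \<and> (\<exists>b1 b2 a. a \<in> csyms V \<and> p (Suc k) = cstep V w (p k) b1 b2 a)"
  shows "\<exists>P \<omega>. valid_prover V P \<and> (\<forall>k. core (run V P w \<omega> k) = p k)"
proof -
  have "\<forall>k. \<exists>x. snd (snd x) \<in> csyms V \<and> p (Suc k) = cstep V w (p k) (fst x) (fst (snd x)) (snd (snd x))"
    using assms(3) by force
  then obtain f where f: "\<forall>k. snd (snd (f k)) \<in> csyms V \<and> p (Suc k) = cstep V w (p k) (fst (f k)) (fst (snd (f k))) (snd (snd (f k)))"
    by (metis choice)
  define B1 where "B1 k = fst (f k)" for k
  define B2 where "B2 k = fst (snd (f k))" for k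
  define A where "A k = snd (snd (f k))" for k
  have fA: "A k \<in> csyms V" and fS: "p (Suc k) = cstep V w (p k) (B1 k) (B2 k) (A k)" for k
    using f by (auto simp: A_def B1_def B2_def)
  define R where "R = rec_nat (init_config V) (\<lambda>k c. gen_step V w c (B1 k) (B2 k) (\<lambda>_. A k))"
  have R0: "R 0 = init_config V" and RS: "R (Suc k) = gen_step V w (R k) (B1 k) (B2 k) (\<lambda>_. A k)" for k
    by (simp_all add: R_def)
  have coreR: "core (R k) = p k" for k
    by (induction k) (simp_all add: R0 RS assms(2) core_gen_const fS)
  have nh: "cst (R k) \<noteq> acc V" "cst (R k) \<noteq> rej V" for k
    using assms(3) coreR[of k] fst_core[of "R k"] by auto
  define pR where "pR k = npriv (R k) + npub (R k)" for k
  define hl where "hl k = length (hist (R k))" for k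
  define ipub where "ipub k = (if privst V (cst (R k)) then pR k + 1 else pR k)" for k
  have pRS: "pR (Suc k) = pR k + (if privst V (cst (R k)) then 1 else 0) + (if pubst V (cst (R k)) then 1 else 0)" for k
    by (simp add: pR_def RS gen_counters)
  have hlS: "hl (Suc k) = hl k + (if commst V (cst (R k)) then 1 else 0)" for k
    by (simp add: hl_def RS gen_counters)
  have mpR: "mono pR" unfolding mono_iff_le_Suc by (simp add: pRS)
  have mhl: "mono hl" unfolding mono_iff_le_Suc by (simp add: hlS)
  define \<omega> where "\<omega> m = (if \<exists>k. privst V (cst (R k)) \<and> pR k = m
      then B1 (SOME k. privst V (cst (R k)) \<and> pR k = m)
      else B2 (SOME k. pubst V (cst (R k)) \<and> ipub k = m))" for m
  define P :: "'a prover" where "P w' h = (if \<exists>k. commst V (cst (R k)) \<and> Suc (hl k) = length h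
      then A (SOME k. commst V (cst (R k)) \<and> Suc (hl k) = length h) else 0)" for w' h
  have \<omega>1: "\<omega> (pR k) = B1 k" if pk: "privst V (cst (R k))" for k
  proof -
    have ex: "\<exists>k'. privst V (cst (R k')) \<and> pR k' = pR k" using pk by blast
    then have s: "privst V (cst (R (SOME k'. privst V (cst (R k')) \<and> pR k' = pR k))) \<and> pR (SOME k'. privst V (cst (R k')) \<and> pR k' = pR k) = pR k"
      by (rule someI_ex)
    have "(SOME k'. privst V (cst (R k')) \<and> pR k' = pR k) = k"
      apply (rule interval_uniq[OF mpR, of _ "pR k"])
      using s pk by (auto simp: pRS)
    then show ?thesis using ex by (simp add: \<omega>_def)
  qed
  have \<omega>2: "\<omega> (ipub k) = B2 k" if pk: "pubst V (cst (R k))" for k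
  proof -
    have nex: "\<not> (\<exists>k'. privst V (cst (R k')) \<and> pR k' = ipub k)"
    proof
      assume "\<exists>k'. privst V (cst (R k')) \<and> pR k' = ipub k"
      then obtain k' where k': "privst V (cst (R k'))" "pR k' = ipub k" by blast
      have "k' = k"
        apply (rule interval_uniq[OF mpR, of _ "ipub k"])
        using k' pk by (auto simp: pRS ipub_def)
      then show False using k' by (simp add: ipub_def)
    qed
    have ex: "\<exists>k'. pubst V (cst (R k')) \<and> ipub k' = ipub k" using pk by blast
    then have s: "pubst V (cst (R (SOME k'. pubst V (cst (R k')) \<and> ipub k' = ipub k))) \<and> ipub (SOME k'. pubst V (cst (R k')) \<and> ipub k' = ipub k) = ipub k"
      by (rule someI_ex)
    define K where "K = (SOME k'. pubst V (cst (R k')) \<and> ipub k' = ipub k)"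
    have sK: "pubst V (cst (R K))" "ipub K = ipub k" using s by (simp_all add: K_def)
    have iv: "pR j \<le> ipub j \<and> ipub j < pR (Suc j)" if "pubst V (cst (R j))" for j
      using that by (simp add: pRS ipub_def)
    have "K = k"
      apply (rule interval_uniq[OF mpR, of _ "ipub k"])
      using iv[OF sK(1)] iv[OF pk] sK(2) by auto
    then have "(SOME k'. pubst V (cst (R k')) \<and> ipub k' = ipub k) = k" by (simp add: K_def)
    then show ?thesis using nex unfolding \<omega>_def by (simp only: if_False)
  qed
  have P1: "P w h = A k" if pk: "commst V (cst (R k))" "length h = Suc (hl k)" for k h
  proof -
    have ex: "\<exists>k'. commst V (cst (R k')) \<and> Suc (hl k') = length h" using pk by auto
    then have s: "commst V (cst (R (SOME k'. commst V (cst (R k')) \<and> Suc (hl k') = length h))) \<and> Suc (hl (SOME k'. commst V (cst (R k')) \<and> Suc (hl k') = length h)) = length h"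
      by (rule someI_ex)
    have "(SOME k'. commst V (cst (R k')) \<and> Suc (hl k') = length h) = k"
      apply (rule interval_uniq[OF mhl, of _ "hl k"])
      using s pk by (auto simp: hlS)
    then show ?thesis using ex by (simp add: P_def)
  qed
  have valid: "valid_prover V P"
    unfolding valid_prover_def P_def using fA assms(1) by auto
  have runR: "run V P w \<omega> k = R k" for k
  proof (induction k)
    case 0 then show ?case by (simp add: R0)
  next
    case (Suc k)
    have "run V P w \<omega> (Suc k) = step V P w \<omega> (R k)" by (simp add: Suc)
    also have "\<dots> = gen_step V w (R k) (\<omega> (pR k)) (\<omega> (ipub k)) (P w)"
      using nh[of k] by (simp add: step_gen pR_def ipub_def)
    also have "\<dots> = gen_step V w (R k) (B1 k) (B2 k) (\<lambda>_. A k)"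
      by (rule gen_step_cong) (auto simp: \<omega>1 \<omega>2 P1 hl_def)
    finally show ?case by (simp add: RS)
  qed
  show ?thesis
    apply (rule exI[of _ P], rule exI[of _ \<omega>])
    using valid runR coreR by simp
qed



definition Tapes :: "'a verifier \<Rightarrow> nat \<Rightarrow> (nat \<Rightarrow> nat) set" where
  "Tapes V C = {f. \<forall>i. (i \<le> C \<longrightarrow> f i \<in> wsyms V) \<and> (C < i \<longrightarrow> f i = 0)}"

definition SS :: "'a verifier \<Rightarrow> nat \<Rightarrow> nat \<Rightarrow> core set" where
  "SS V n C = states V \<times> {..n+1} \<times> Tapes V C \<times> {..C} \<times> csyms V"

lemma finite_Tapes: assumes "finite (wsyms V)" shows "finite (Tapes V C)"
proof -
  have "inj_on (\<lambda>f. restrict f {..C}) (Tapes V C)"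
  proof (rule inj_onI)
    fix f g assume fg: "f \<in> Tapes V C" "g \<in> Tapes V C" "restrict f {..C} = restrict g {..C}"
    show "f = g"
    proof
      fix i show "f i = g i"
      proof (cases "i \<le> C")
        case True then show ?thesis using fg(3) by (metis atMost_iff restrict_apply')
      next
        case False then show ?thesis using fg(1,2) by (simp add: Tapes_def)
      qed
    qed
  qed
  moreover have "(\<lambda>f. restrict f {..C}) ` Tapes V C \<subseteq> PiE {..C} (\<lambda>_. wsyms V)"
    by (auto simp: Tapes_def split: if_splits)
  moreover have "finite (PiE {..C} (\<lambda>_. wsyms V))" using assms by (simp add: finite_PiE)
  ultimately show ?thesis by (meson finite_imageD finite_subset)
qed

lemma finite_SS: "wf_verifier V \<Longrightarrow> finite (SS V n C)"
proof -
  assume wf: "wf_verifier V"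
  have "finite (Tapes V C)" using wf finite_Tapes by (auto simp: wf_verifier_def)
  then show ?thesis using wf unfolding SS_def wf_verifier_def by (simp add: finite_cartesian_product)
qed

lemma card_SS: "wf_verifier V \<Longrightarrow> card (SS V n C) = card (states V) * (n + 2) * (card (Tapes V C) * ((C + 1) * card (csyms V)))"
  unfolding SS_def by (simp add: card_cartesian_product algebra_simps)

lemma gen_props:
  assumes wf: "wf_verifier V" and c: "cst c \<in> states V" "wtape c (whead c) \<in> wsyms V" "cell c \<in> csyms V"
    and ans: "\<forall>h. ans h \<in> csyms V"
  shows "cst (gen_step V w c b1 b2 ans) \<in> states V \<and> ihead (gen_step V w c b1 b2 ans) \<le> length w + 1
    \<and> (\<exists>x \<in> wsyms V. wtape (gen_step V w c b1 b2 ans) = (wtape c)(whead c := x))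
    \<and> cell (gen_step V w c b1 b2 ans) \<in> csyms V"
proof -
  obtain q' g' c' dI dW where d: "delta V (cst c) (input_sym w (ihead c)) (wtape c (whead c)) (cell c)
        (if privst V (cst c) then b1 else False) (if pubst V (cst c) then b2 else False) = (q', g', c', dI, dW)"
    by (metis prod_cases5)
  have "q' \<in> states V \<and> g' \<in> wsyms V"
    using wf c d unfolding wf_verifier_def
    by (metis (mono_tags, lifting) case_prod_conv)
  then show ?thesis using d c ans unfolding gen_step_def by auto
qed

lemma run_inv:
  assumes wf: "wf_verifier V" and P: "valid_prover V P"
    and C: "\<forall>k. whead (run V P w \<omega> k) \<le> C"
  shows "core (run V P w \<omega> k) \<in> SS V (length w) C"
proof (induction k)
  case 0 then show ?case using wf C[rule_format, of 0]
    by (simp add: SS_def core_def init_config_def Tapes_def wf_verifier_def)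
next
  case (Suc k)
  let ?c = "run V P w \<omega> k"
  show ?case
  proof (cases "cst ?c = acc V \<or> cst ?c = rej V")
    case True then show ?thesis using Suc by (simp add: step_halted)
  next
    case False
    have inv: "cst ?c \<in> states V" "ihead ?c \<le> length w + 1" "wtape ?c \<in> Tapes V C" "whead ?c \<le> C" "cell ?c \<in> csyms V"
      using Suc by (auto simp: SS_def core_def)
    have ws: "wtape ?c (whead ?c) \<in> wsyms V" using inv(3,4) by (simp add: Tapes_def)
    have ans: "\<forall>h. P w h \<in> csyms V" using P by (simp add: valid_prover_def)
    have eq: "run V P w \<omega> (Suc k) = gen_step V w ?c (\<omega> (npriv ?c + npub ?c))
     (\<omega> (if privst V (cst ?c) then npriv ?c + npub ?c + 1 else npriv ?c + npub ?c)) (P w)"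
      using False by (simp add: step_gen)
    obtain x where x: "x \<in> wsyms V" "wtape (run V P w \<omega> (Suc k)) = (wtape ?c)(whead ?c := x)"
      using gen_props[OF wf inv(1) ws inv(5) ans] eq by metis
    have "wtape (run V P w \<omega> (Suc k)) \<in> Tapes V C"
      using x inv(3,4) by (auto simp: Tapes_def)
    then show ?thesis using gen_props[OF wf inv(1) ws inv(5) ans] eq C[rule_format, of "Suc k"]
      by (simp add: SS_def core_def)
  qed
qed

lemma run_rel:
  assumes "cst (run V P w \<omega> m) \<noteq> acc V" "cst (run V P w \<omega> m) \<noteq> rej V"
  shows "\<exists>b1 b2. core (run V P w \<omega> (Suc m)) = cstep V w (core (run V P w \<omega> m)) b1 b2 (cell (run V P w \<omega> (Suc m)))"
  using assms by (simp add: step_gen) (metis core_gen)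

lemma lasso_idx:
  fixes i j :: nat
  assumes "i < j"
    and g_def: "\<And>k. g k = (if k < i then k else i + (k - i) mod (j - i))"
  shows "g k < j" "g (Suc k) = Suc (g k) \<or> (Suc (g k) = j \<and> g (Suc k) = i)" "g 0 = 0"
proof -
  show "g k < j" using assms by (simp add: g_def) (metis add_diff_inverse_nat le_simps(1) less_diff_conv linorder_not_less mod_less_divisor nat_add_left_cancel_less zero_less_diff)
  show "g 0 = 0" by (simp add: g_def)
  show "g (Suc k) = Suc (g k) \<or> (Suc (g k) = j \<and> g (Suc k) = i)"
  proof (cases "Suc k < i")
    case True then show ?thesis by (simp add: g_def)
  next
    case False
    show ?thesis
    proof (cases "k < i")
      case True then have "Suc k = i" using False by simp
      then show ?thesis using True by (simp add: g_def)
    next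
      case False
      then have e: "Suc k - i = Suc (k - i)" by (simp add: Suc_diff_le)
      show ?thesis using False assms(1) by (simp add: g_def e mod_Suc; linarith)
    qed
  qed
qed

lemma linear_halt:
  assumes wf: "wf_verifier V"
    and C: "\<forall>P \<omega> k. valid_prover V P \<longrightarrow> whead (run V P w \<omega> k) \<le> C"
    and halts: "\<forall>P \<omega>. valid_prover V P \<longrightarrow> (\<exists>k. cst (run V P w \<omega> k) \<in> {acc V, rej V})"
    and P: "valid_prover V P"
  shows "\<exists>k \<le> card (SS V (length w) C). cst (run V P w \<omega> k) \<in> {acc V, rej V}"
proof (rule ccontr)
  assume nh0: "\<not> ?thesis"
  let ?M = "card (SS V (length w) C)"
  let ?r = "run V P w \<omega>"
  have nh: "cst (?r k) \<noteq> acc V" "cst (?r k) \<noteq> rej V" if "k \<le> ?M" for k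
    using nh0 that by auto
  have inv: "core (?r k) \<in> SS V (length w) C" for k
    using run_inv[OF wf P] C P by blast
  have "\<not> inj_on (\<lambda>k. core (?r k)) {..?M}"
  proof
    assume "inj_on (\<lambda>k. core (?r k)) {..?M}"
    then have "card {..?M} \<le> ?M"
      using card_inj_on_le[of _ "{..?M}" "SS V (length w) C"] inv finite_SS[OF wf] by blast
    then show False by simp
  qed
  then obtain i j where ij: "i < j" "j \<le> ?M" "core (?r i) = core (?r j)"
    unfolding inj_on_def by (metis atMost_iff linorder_neqE_nat)
  define g where "g k = (if k < i then k else i + (k - i) mod (j - i))" for k
  note gp = lasso_idx[OF ij(1), of g, OF g_def]
  define p where "p k = core (?r (g k))" for k
  have "\<exists>P' \<omega>'. valid_prover V P' \<and> (\<forall>k. core (run V P' w \<omega>' k) = p k)"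
  proof (rule realize)
    show "0 \<in> csyms V" using wf by (simp add: wf_verifier_def)
    show "p 0 = core (init_config V)" by (simp add: p_def gp(3))
    show "\<forall>k. fst (p k) \<notin> {acc V, rej V} \<and> (\<exists>b1 b2 a. a \<in> csyms V \<and> p (Suc k) = cstep V w (p k) b1 b2 a)"
    proof
      fix k
      have gk: "g k \<le> ?M" using gp(1)[of k] ij(2) by simp
      have e: "p (Suc k) = core (?r (Suc (g k)))"
        using gp(2)[of k] ij(3) by (auto simp: p_def)
      have cs: "cell (?r (Suc (g k))) \<in> csyms V" using inv[of "Suc (g k)"] by (simp add: SS_def core_def)
      obtain b1 b2 where "core (?r (Suc (g k))) = cstep V w (core (?r (g k))) b1 b2 (cell (?r (Suc (g k))))"
        using run_rel[OF nh[OF gk]] by blast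
      then show "fst (p k) \<notin> {acc V, rej V} \<and> (\<exists>b1 b2 a. a \<in> csyms V \<and> p (Suc k) = cstep V w (p k) b1 b2 a)"
        using nh[OF gk] e cs by (auto simp: p_def)
    qed
  qed
  then obtain P' \<omega>' where P': "valid_prover V P'" "\<forall>k. core (run V P' w \<omega>' k) = p k" by blast
  obtain k where k: "cst (run V P' w \<omega>' k) \<in> {acc V, rej V}" using halts P'(1) by blast
  have "cst (run V P' w \<omega>' k) = cst (?r (g k))"
    using P'(2) fst_core by (metis p_def)
  moreover have "g k \<le> ?M" using gp(1)[of k] ij(2) by simp
  ultimately show False using k nh by auto
qed



lemma upgrade:
  assumes wf: "wf_verifier V" and b: "bounds_const_time t V"
  shows "bounds_linear V"
proof -
  from b obtain C where C: "\<forall>w P \<omega> k. valid_prover V P \<longrightarrow> whead (run V P w \<omega> k) \<le> C"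
    unfolding bounds_const_time_def const_space_def by blast
  from b obtain c N where T: "\<forall>w. length w \<ge> N \<longrightarrow> (\<forall>P \<omega>. valid_prover V P \<longrightarrow>
      (\<exists>k \<le> c * t (length w). cst (run V P w \<omega> k) \<in> {acc V, rej V}))"
    unfolding bounds_const_time_def time_O_def by blast
  define K where "K = card (states V) * (card (Tapes V C) * ((C + 1) * card (csyms V)))"
  have key: "\<exists>k \<le> 3 * K * length w. cst (run V P w \<omega> k) \<in> {acc V, rej V}"
    if w: "length w \<ge> max N 1" and P: "valid_prover V P" for w P \<omega>
  proof -
    have h: "\<forall>P \<omega>. valid_prover V P \<longrightarrow> (\<exists>k. cst (run V P w \<omega> k) \<in> {acc V, rej V})"
    proof (intro allI impI)
      fix P' \<omega>' assume "valid_prover V P'"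
      moreover have "length w \<ge> N" using w by simp
      ultimately obtain k where "cst (run V P' w \<omega>' k) \<in> {acc V, rej V}" using T by meson
      then show "\<exists>k. cst (run V P' w \<omega>' k) \<in> {acc V, rej V}" by blast
    qed
    have C': "\<forall>P \<omega> k. valid_prover V P \<longrightarrow> whead (run V P w \<omega> k) \<le> C" using C by blast
    obtain k where k: "k \<le> card (SS V (length w) C)" "cst (run V P w \<omega> k) \<in> {acc V, rej V}"
      using linear_halt[OF wf C' h P] by blast
    have "card (SS V (length w) C) = K * (length w + 2)"
      using card_SS[OF wf] by (simp add: K_def algebra_simps)
    also have "\<dots> \<le> K * (3 * length w)" using w by (intro mult_le_mono2) simp
    finally have "k \<le> 3 * K * length w" using k(1) by simp
    then show ?thesis using k(2) by blast
  qed
  have bits: "npriv (run V P w \<omega> k) \<le> 3 * K * length w \<and> npub (run V P w \<omega> k) \<le> 3 * K * length w"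
    if w: "length w \<ge> max N 1" and P: "valid_prover V P" for w P \<omega> k
  proof -
    obtain k0 where k0: "k0 \<le> 3 * K * length w" "cst (run V P w \<omega> k0) \<in> {acc V, rej V}"
      using key[OF w P] by blast
    show ?thesis
    proof (cases "k \<le> k0")
      case True then show ?thesis using k0(1) npriv_le[of V P w \<omega> k] npub_le[of V P w \<omega> k] by linarith
    next
      case False
      then have "run V P w \<omega> k = run V P w \<omega> k0" by (intro run_halted[OF k0(2)]) simp
      then show ?thesis using k0(1) npriv_le[of V P w \<omega> k0] npub_le[of V P w \<omega> k0] by simp
    qed
  qed
  show ?thesis
    unfolding bounds_linear_def
  proof (intro conjI)
    show "const_space V" using b by (simp add: bounds_const_time_def)
    show "priv_bits_O V (\<lambda>n. n)" unfolding priv_bits_O_def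
      apply (rule exI[of _ "3 * K"], rule exI[of _ "max N 1"])
      using bits by blast
    show "pub_bits_O V (\<lambda>n. n)" unfolding pub_bits_O_def
      apply (rule exI[of _ "3 * K"], rule exI[of _ "max N 1"])
      using bits by blast
    show "time_O V (\<lambda>n. n)" unfolding time_O_def
      apply (rule exI[of _ "3 * K"], rule exI[of _ "max N 1"])
      using key by blast
  qed
qed

theorem theorem3:
  fixes t :: "nat \<Rightarrow> nat"
  shows "(IP (bounds_const_time t) :: ('a::finite) list set set) \<subseteq> IP bounds_linear
    \<and> (IP_high (bounds_const_time t) :: ('a::finite) list set set) \<subseteq> IP_high bounds_linear"
proof
  show "(IP (bounds_const_time t) :: ('a::finite) list set set) \<subseteq> IP bounds_linear"
  proof
    fix L :: "'a list set" assume L: "L \<in> IP (bounds_const_time t)"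
    show "L \<in> IP bounds_linear" unfolding IP_def mem_Collect_eq
    proof (intro allI impI)
      fix \<epsilon> :: real assume "\<epsilon> > 0"
      then obtain V ep em where V: "wf_verifier V" "bounds_const_time t V" "verifies V L ep em" "max ep em \<le> \<epsilon>"
        using L unfolding IP_def by blast
      have "bounds_linear V" using upgrade[OF V(1,2)] .
      then show "\<exists>V ep em. wf_verifier V \<and> bounds_linear V \<and> verifies V L ep em \<and> max ep em \<le> \<epsilon>"
        using V by blast
    qed
  qed
  show "(IP_high (bounds_const_time t) :: ('a::finite) list set set) \<subseteq> IP_high bounds_linear"
  proof
    fix L :: "'a list set" assume L: "L \<in> IP_high (bounds_const_time t)"
    then obtain V ep em where V: "wf_verifier V" "bounds_const_time t V" "verifies V L ep em"
      unfolding IP_high_def by blast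
    have "bounds_linear V" using upgrade[OF V(1,2)] .
    then show "L \<in> IP_high bounds_linear" unfolding IP_high_def using V by blast
  qed
qed

end
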